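(* Let $n\ge 1$ and let $T_1,\dots,T_n$ be independent Bernoulli random variables, $T_i$ having parameter $q_i=P(T_i=1)\in[0,1]$. Let $\overline T=\frac1n\sum_{i=1}^n T_i$, $\overline q=\frac1n\sum_{i=1}^n q_i$, and let $0\le\alpha\le 1/2$. Define the random variable $$\hat q=\begin{cases} I^{-1}_{\alpha}\big(n\overline T-1,\; n(1-\overline T)+2\big) & \text{if } n\overline T\ge 1,\\ 0 & \text{if } n\overline T=0.\end{cases}$$ Then $P(\hat q\le \overline q)\ge 1-\alpha$, i.e. $[\hat q,1]$ is a confidence interval for $\overline q$ with confidence level $1-\alpha$.
   Context: $I_x(\mathsf a,\mathsf b)$ denotes the regularized incomplete Beta function (the cumulative distribution function at $x$ of the Beta$(\mathsf a,\mathsf b)$ distribution). $I^{-1}_\alpha(\mathsf a,\mathsf b)$ denotes its inverse in the first variable, i.e. the value $x\in[0,1]$ with $I_x(\mathsf a,\mathsf b)=\alpha$. When the first argument equals $0$ (the case $n\overline T=1$), $I^{-1}_\alpha(0,\mathsf b)$ is understood as $0$ (the limiting value, since $I_x(0,\mathsf b)=1$ for all $x>0$). *)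

theory Defs
  imports "HOL-Probability.Probability"
begin

definition reg_inc_beta :: "real \<Rightarrow> real \<Rightarrow> real \<Rightarrow> real" where
  "reg_inc_beta x a b =
     (LBINT t=0..x. t powr (a - 1) * (1 - t) powr (b - 1)) /
     (LBINT t=0..1. t powr (a - 1) * (1 - t) powr (b - 1))"

text \<open>Inverse in the first variable: the x in [0,1] with I_x(a,b) = alpha.
  For first argument 0 the value is 0 by convention (limiting value).\<close>
definition reg_inc_beta_inv :: "real \<Rightarrow> real \<Rightarrow> real \<Rightarrow> real" where
  "reg_inc_beta_inv \<alpha> a b =
     (if a = 0 then 0 else (THE x. x \<in> {0..1} \<and> reg_inc_beta x a b = \<alpha>))"

text \<open>The estimator q-hat as a function of k = n * T-bar (the number of successes).\<close>
definition q_hat :: "nat \<Rightarrow> real \<Rightarrow> nat \<Rightarrow> real" where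
  "q_hat n \<alpha> k =
     (if k \<ge> 1 then reg_inc_beta_inv \<alpha> (real k - 1) (real n - real k + 2) else 0)"

end

theory Submission
  imports Defs
begin


definition pw :: "nat set \<Rightarrow> (nat \<Rightarrow> real) \<Rightarrow> nat set \<Rightarrow> real" where
  "pw I q A = (\<Prod>i\<in>A. q i) * (\<Prod>i\<in>I-A. 1 - q i)"

definition psum :: "nat set \<Rightarrow> (nat \<Rightarrow> real) \<Rightarrow> (nat \<Rightarrow> bool) \<Rightarrow> real" where
  "psum I q P = (\<Sum>A\<in>{A. A \<subseteq> I \<and> P (card A)}. pw I q A)"

lemma psum_insert:
  assumes "finite J" "i \<notin> J"
  shows "psum (insert i J) q P = (1 - q i) * psum J q P + q i * psum J q (\<lambda>c. P (Suc c))"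
proof -
  have fin: "finite {A. A \<subseteq> J \<and> Q (card A)}" for Q
    by (rule finite_subset[of _ "Pow J"]) (use assms in auto)
  have split: "{A. A \<subseteq> insert i J \<and> P (card A)} =
     {A. A \<subseteq> J \<and> P (card A)} \<union> insert i ` {B. B \<subseteq> J \<and> P (Suc (card B))}"
  proof (rule set_eqI, rule iffI)
    fix A assume A: "A \<in> {A. A \<subseteq> insert i J \<and> P (card A)}"
    show "A \<in> {A. A \<subseteq> J \<and> P (card A)} \<union> insert i ` {B. B \<subseteq> J \<and> P (Suc (card B))}"
    proof (cases "i \<in> A")
      case True
      have e: "A = insert i (A - {i})" using True by auto
      have "finite A" using A assms(1) finite_subset by auto
      then have "card (insert i (A - {i})) = Suc (card (A - {i}))"
        by (intro card_insert_disjoint) auto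
      then have "card A = Suc (card (A - {i}))" using e by metis
      then have "A - {i} \<in> {B. B \<subseteq> J \<and> P (Suc (card B))}" using A by auto
      then have "A \<in> insert i ` {B. B \<subseteq> J \<and> P (Suc (card B))}"
        using e by (rule rev_image_eqI)
      then show ?thesis by blast
    next
      case False then show ?thesis using A by auto
    qed
  next
    fix A assume "A \<in> {A. A \<subseteq> J \<and> P (card A)} \<union> insert i ` {B. B \<subseteq> J \<and> P (Suc (card B))}"
    then show "A \<in> {A. A \<subseteq> insert i J \<and> P (card A)}"
      using assms by (auto simp: card_insert_if finite_subset)
  qed
  have disj: "{A. A \<subseteq> J \<and> P (card A)} \<inter> insert i ` {B. B \<subseteq> J \<and> P (Suc (card B))} = {}"
    using assms by auto
  have inj: "inj_on (insert i) {B. B \<subseteq> J \<and> P (Suc (card B))}"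
    using assms unfolding inj_on_def by (metis insert_ident mem_Collect_eq subset_iff)
  have w1: "pw (insert i J) q A = (1 - q i) * pw J q A" if "A \<subseteq> J" for A
  proof -
    have "insert i J - A = insert i (J - A)" using that assms by auto
    then show ?thesis using that assms unfolding pw_def
      by (simp add: finite_subset)
  qed
  have w2: "pw (insert i J) q (insert i B) = q i * pw J q B" if "B \<subseteq> J" for B
  proof -
    have "insert i J - insert i B = J - B" using that assms by auto
    moreover have "i \<notin> B" using that assms by auto
    ultimately show ?thesis using that assms unfolding pw_def
      by (simp add: finite_subset)
  qed
  have "psum (insert i J) q P = (\<Sum>A\<in>{A. A \<subseteq> J \<and> P (card A)}. pw (insert i J) q A)
      + (\<Sum>A\<in>insert i ` {B. B \<subseteq> J \<and> P (Suc (card B))}. pw (insert i J) q A)"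
    unfolding psum_def split by (rule sum.union_disjoint) (auto intro: finite_imageI fin simp: disj)
  also have "(\<Sum>A\<in>{A. A \<subseteq> J \<and> P (card A)}. pw (insert i J) q A) = (1 - q i) * psum J q P"
    unfolding psum_def sum_distrib_left by (rule sum.cong) (auto simp: w1)
  also have "(\<Sum>A\<in>insert i ` {B. B \<subseteq> J \<and> P (Suc (card B))}. pw (insert i J) q A)
      = (\<Sum>B\<in>{B. B \<subseteq> J \<and> P (Suc (card B))}. pw (insert i J) q (insert i B))"
    using sum.reindex[OF inj, of "pw (insert i J) q"] by (simp add: comp_def)
  also have "\<dots> = q i * psum J q (\<lambda>c. P (Suc c))"
    unfolding psum_def sum_distrib_left by (rule sum.cong) (auto simp: w2)
  finally show ?thesis .
qed

lemma psum_fin: "finite I \<Longrightarrow> finite {A. A \<subseteq> I \<and> P (card A)}"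
  by (rule finite_subset[of _ "Pow I"]) auto

lemma pw_cong: "(\<And>i. i \<in> I \<Longrightarrow> q i = q' i) \<Longrightarrow> A \<subseteq> I \<Longrightarrow> pw I q A = pw I q' A"
  unfolding pw_def by (intro arg_cong2[where f="(*)"] prod.cong) auto

lemma psum_cong: "(\<And>i. i \<in> I \<Longrightarrow> q i = q' i) \<Longrightarrow> psum I q P = psum I q' P"
  unfolding psum_def by (rule sum.cong) (auto intro: pw_cong)

lemma psum_cong_P:
  assumes "\<And>c. c \<le> card I \<Longrightarrow> P c = P' c" "finite I"
  shows "psum I q P = psum I q P'"
proof -
  have "{A. A \<subseteq> I \<and> P (card A)} = {A. A \<subseteq> I \<and> P' (card A)}"
  proof (intro Collect_cong conj_cong refl)
    fix A assume "A \<subseteq> I"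
    then have "card A \<le> card I" using assms(2) by (rule card_mono[rotated])
    then show "P (card A) = P' (card A)" by (rule assms(1))
  qed
  then show ?thesis unfolding psum_def by simp
qed

lemma pw_nonneg: "(\<And>i. i \<in> I \<Longrightarrow> 0 \<le> q i \<and> q i \<le> 1) \<Longrightarrow> A \<subseteq> I \<Longrightarrow> 0 \<le> pw I q A"
  unfolding pw_def by (intro mult_nonneg_nonneg prod_nonneg) auto

lemma psum_nonneg: "(\<And>i. i \<in> I \<Longrightarrow> 0 \<le> q i \<and> q i \<le> 1) \<Longrightarrow> 0 \<le> psum I q P"
  unfolding psum_def by (intro sum_nonneg pw_nonneg) auto

lemma psum_empty: "psum {} q P = (if P 0 then 1 else 0)"
proof -
  have e: "{A. A \<subseteq> {} \<and> P (card A)} = (if P 0 then {{}} else {})" by auto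
  show ?thesis unfolding psum_def e by (simp add: pw_def)
qed

lemma psum_split:
  assumes "finite I"
  shows "psum I q P = psum I q (\<lambda>c. P c \<and> Q c) + psum I q (\<lambda>c. P c \<and> \<not> Q c)"
proof -
  have eq: "{A. A \<subseteq> I \<and> P (card A)} = {A. A \<subseteq> I \<and> (P (card A) \<and> Q (card A))} \<union> {A. A \<subseteq> I \<and> (P (card A) \<and> \<not> Q (card A))}"
    by auto
  show ?thesis unfolding psum_def eq
    by (rule sum.union_disjoint) (auto intro: psum_fin assms)
qed

lemma psum_total: "finite I \<Longrightarrow> psum I q (\<lambda>_. True) = 1"
proof (induction I rule: finite_induct)
  case empty then show ?case by (simp add: psum_empty)
next
  case (insert i J) then show ?case by (simp add: psum_insert)
qed

lemma psum_zeros: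
  assumes "finite Z" "finite J" "Z \<inter> J = {}" "\<And>i. i \<in> Z \<Longrightarrow> q i = 0"
  shows "psum (Z \<union> J) q P = psum J q P"
  using assms
proof (induction Z rule: finite_induct)
  case empty then show ?case by simp
next
  case (insert i Z)
  then have "psum (insert i (Z \<union> J)) q P = (1 - q i) * psum (Z \<union> J) q P + q i * psum (Z \<union> J) q (\<lambda>c. P (Suc c))"
    by (intro psum_insert) auto
  then show ?case using insert by simp
qed

lemma psum_ones:
  assumes "finite Os" "finite J" "Os \<inter> J = {}" "\<And>i. i \<in> Os \<Longrightarrow> q i = 1"
  shows "psum (Os \<union> J) q P = psum J q (\<lambda>c. P (c + card Os))"
  using assms
proof (induction Os arbitrary: P rule: finite_induct)
  case empty then show ?case by simp
next
  case (insert i Os)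
  then have "psum (insert i (Os \<union> J)) q P = (1 - q i) * psum (Os \<union> J) q P + q i * psum (Os \<union> J) q (\<lambda>c. P (Suc c))"
    by (intro psum_insert) auto
  also have "\<dots> = psum J q (\<lambda>c. P (Suc (c + card Os)))"
    using insert by simp
  finally show ?case using insert by simp
qed

lemma psum_const:
  assumes "finite J"
  shows "psum J (\<lambda>_. a) P = (\<Sum>c\<in>{c\<in>{0..card J}. P c}. real (card J choose c) * a ^ c * (1 - a) ^ (card J - c))"
proof -
  let ?S = "{A. A \<subseteq> J \<and> P (card A)}"
  let ?f = "\<lambda>c. a ^ c * (1 - a) ^ (card J - c)"
  have pw: "pw J (\<lambda>_. a) A = ?f (card A)" if "A \<subseteq> J" for A
    using that assms by (simp add: pw_def card_Diff_subset finite_subset)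
  have "psum J (\<lambda>_. a) P = (\<Sum>A\<in>?S. ?f (card A))"
    unfolding psum_def by (rule sum.cong) (auto simp: pw)
  also have "\<dots> = (\<Sum>c\<in>{c\<in>{0..card J}. P c}. (\<Sum>A\<in>{A\<in>?S. card A = c}. ?f (card A)))"
    by (rule sum.group[symmetric]) (auto simp: psum_fin assms card_mono)
  also have "\<dots> = (\<Sum>c\<in>{c\<in>{0..card J}. P c}. real (card J choose c) * ?f c)"
  proof (rule sum.cong)
    fix c assume c: "c \<in> {c\<in>{0..card J}. P c}"
    have "{A\<in>?S. card A = c} = {A. A \<subseteq> J \<and> card A = c}" using c by auto
    then have "(\<Sum>A\<in>{A\<in>?S. card A = c}. ?f (card A)) = (\<Sum>A\<in>{A. A \<subseteq> J \<and> card A = c}. ?f c)"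
      by (intro sum.cong) auto
    also have "\<dots> = real (card J choose c) * ?f c" using n_subsets[OF assms] by simp
    finally show "(\<Sum>A\<in>{A\<in>?S. card A = c}. ?f (card A)) = real (card J choose c) * ?f c" .
  qed simp
  finally show ?thesis by (simp add: mult.assoc)
qed



definition bt :: "nat \<Rightarrow> nat \<Rightarrow> real \<Rightarrow> real" where
  "bt n a x = (\<Sum>k\<in>{a..n}. real (n choose k) * x ^ k * (1 - x) ^ (n - k))"

lemma psum_bt: "finite I \<Longrightarrow> psum I (\<lambda>_. x) (\<lambda>c. a \<le> c) = bt (card I) a x"
  unfolding bt_def by (subst psum_const) (auto intro!: sum.cong)

lemma bt_rec: "a < n \<Longrightarrow> bt n a x = real (n choose a) * x ^ a * (1 - x) ^ (n - a) + bt n (Suc a) x"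
  unfolding bt_def by (subst sum.atLeast_Suc_atMost) auto

lemma bt_deriv_aux:
  assumes "1 \<le> a"
  shows "((\<lambda>x. bt (a + r) a x) has_real_derivative
           (real (a + r) * real ((a + r - 1) choose (a - 1)) * x ^ (a - 1) * (1 - x) ^ r)) (at x)"
  using assms
proof (induction r arbitrary: a)
  case 0
  have e: "bt a a = (\<lambda>x. x ^ a)" by (auto simp: bt_def fun_eq_iff)
  have "((\<lambda>x::real. x ^ a) has_real_derivative real a * x ^ (a - 1)) (at x)"
    by (rule derivative_eq_intros refl)+ simp
  then show ?case by (simp add: e)
next
  case (Suc r)
  obtain a0 where a0: "a = Suc a0" using Suc.prems by (cases a) auto
  let ?N = "a + Suc r"
  have e: "bt ?N a = (\<lambda>x. real (?N choose a) * x ^ a * (1 - x) ^ (Suc r) + bt ?N (Suc a) x)"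
    by (rule ext, subst bt_rec) auto
  have IH: "((\<lambda>x. bt (Suc a + r) (Suc a) x) has_real_derivative
           (real (Suc a + r) * real ((Suc a + r - 1) choose a) * x ^ a * (1 - x) ^ r)) (at x)"
    using Suc.IH[of "Suc a"] by simp
  have IH': "((\<lambda>x. bt ?N (Suc a) x) has_real_derivative
           (real ?N * real ((?N - 1) choose a) * x ^ a * (1 - x) ^ r)) (at x)"
    using IH by simp
  have c1n: "a * (?N choose a) = ?N * ((?N - 1) choose (a - 1))"
    by (metis a0 binomial_absorption diff_Suc_1)
  have c1: "real a * real (?N choose a) = real ?N * real ((?N - 1) choose (a - 1))"
    using c1n by (metis of_nat_mult)
  have c2n: "Suc r * (?N choose a) = ?N * ((?N - 1) choose a)"
    by (metis binomial_absorb_comp add_diff_cancel_left')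
  have c2: "real (Suc r) * real (?N choose a) = real ?N * real ((?N - 1) choose a)"
    using c2n by (metis of_nat_mult)
  have d: "((\<lambda>x. real (?N choose a) * x ^ a * (1 - x) ^ (Suc r)) has_real_derivative
      (real (?N choose a) * (real a * x ^ (a - 1) * (1 - x) ^ Suc r - x ^ a * (real (Suc r) * (1 - x) ^ r)))) (at x)"
    apply (rule derivative_eq_intros refl)+
    apply (simp add: algebra_simps)
    done
  have "real (?N choose a) * (real a * x ^ (a - 1) * (1 - x) ^ Suc r - x ^ a * (real (Suc r) * (1 - x) ^ r))
        + real ?N * real ((?N - 1) choose a) * x ^ a * (1 - x) ^ r
      = (real a * real (?N choose a)) * x ^ (a - 1) * (1 - x) ^ Suc r
        - (real (Suc r) * real (?N choose a)) * x ^ a * (1 - x) ^ r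
        + real ?N * real ((?N - 1) choose a) * x ^ a * (1 - x) ^ r"
    by (simp add: algebra_simps)
  also have "\<dots> = real ?N * real ((?N - 1) choose (a - 1)) * x ^ (a - 1) * (1 - x) ^ Suc r"
    unfolding c1 c2 by simp
  finally have eq: "real (?N choose a) * (real a * x ^ (a - 1) * (1 - x) ^ Suc r - x ^ a * (real (Suc r) * (1 - x) ^ r))
        + real ?N * real ((?N - 1) choose a) * x ^ a * (1 - x) ^ r
      = real ?N * real ((?N - 1) choose (a - 1)) * x ^ (a - 1) * (1 - x) ^ Suc r" .
  show ?case unfolding e using DERIV_add[OF d IH'] eq by simp
qed

definition bdens :: "nat \<Rightarrow> nat \<Rightarrow> real \<Rightarrow> real" where
  "bdens n a x = real n * real ((n - 1) choose (a - 1)) * x ^ (a - 1) * (1 - x) ^ (n - a)"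

lemma bt_deriv:
  assumes "1 \<le> a" "a \<le> n"
  shows "(bt n a has_real_derivative bdens n a x) (at x)"
proof -
  obtain r where r: "n = a + r" using assms le_Suc_ex by blast
  show ?thesis using bt_deriv_aux[OF assms(1), of r x] unfolding r bdens_def by simp
qed

lemma bdens_pos: "1 \<le> a \<Longrightarrow> a \<le> n \<Longrightarrow> 0 < x \<Longrightarrow> x < 1 \<Longrightarrow> 0 < bdens n a x"
  unfolding bdens_def by (intro mult_pos_pos) auto

lemma bdens_nonneg: "1 \<le> a \<Longrightarrow> a \<le> n \<Longrightarrow> 0 \<le> x \<Longrightarrow> x \<le> 1 \<Longrightarrow> 0 \<le> bdens n a x"
  unfolding bdens_def by (intro mult_nonneg_nonneg) auto

lemma bt_cont: "continuous_on S (bt n a)"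
  unfolding bt_def by (intro continuous_intros)

lemma bt_isCont: "isCont (bt n a) x"
  by (rule continuous_on_interior[OF bt_cont[of UNIV]]) auto

lemma bt_strict_mono:
  assumes "1 \<le> a" "a \<le> n" "0 \<le> x" "x < y" "y \<le> 1"
  shows "bt n a x < bt n a y"
proof -
  have "\<exists>z. x < z \<and> z < y \<and> bt n a y - bt n a x = (y - x) * bdens n a z"
    by (rule MVT2[OF assms(4), of "bt n a" "bdens n a"]) (rule bt_deriv[OF assms(1,2)])
  then obtain z where z: "x < z" "z < y" "bt n a y - bt n a x = (y - x) * bdens n a z"
    by blast
  have "0 < bdens n a z" using z assms by (intro bdens_pos) auto
  then have "0 < (y - x) * bdens n a z" using assms by simp
  then show ?thesis using z by linarith
qed

lemma bt_mono:
  assumes "1 \<le> a" "a \<le> n" "0 \<le> x" "x \<le> y" "y \<le> 1"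
  shows "bt n a x \<le> bt n a y"
  using bt_strict_mono[OF assms(1,2,3) _ assms(5)] assms(4) by (cases "x = y") auto

lemma bt_nonneg: "0 \<le> x \<Longrightarrow> x \<le> 1 \<Longrightarrow> 0 \<le> bt n a x"
  unfolding bt_def by (intro sum_nonneg mult_nonneg_nonneg) auto

lemma bt_zero: "1 \<le> a \<Longrightarrow> bt n a 0 = 0"
  unfolding bt_def by (intro sum.neutral) auto

lemma binom_total: "(\<Sum>k\<in>{0..n}. real (n choose k) * x ^ k * (1 - x) ^ (n - k)) = 1"
  using binomial_ring[of x "1 - x" n] by (simp add: atMost_atLeast0)

lemma bt_one: "a \<le> n \<Longrightarrow> bt n a 1 = 1"
proof -
  assume a: "a \<le> n"
  have "bt n a 1 = (\<Sum>k\<in>{a..n}. if k = n then 1 else 0)"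
    unfolding bt_def by (intro sum.cong) auto
  also have "\<dots> = 1" using a by simp
  finally show ?thesis .
qed



definition bb :: "nat \<Rightarrow> real \<Rightarrow> nat \<Rightarrow> real" where
  "bb n x k = real (n choose k) * x ^ k * (1 - x) ^ (n - k)"

lemma bb_nonneg: "0 \<le> x \<Longrightarrow> x \<le> 1 \<Longrightarrow> 0 \<le> bb n x k"
  unfolding bb_def by (intro mult_nonneg_nonneg) auto

lemma bb_step:
  assumes "k < n"
  shows "bb n x (Suc k) * real (Suc k) * (1 - x) = bb n x k * real (n - k) * x"
proof -
  have cn: "(n choose Suc k) * Suc k = (n choose k) * (n - k)"
    using binomial_absorption[of k n] binomial_absorb_comp[of n k] by (simp add: mult.commute)
  have c: "real (n choose Suc k) * real (Suc k) = real (n choose k) * real (n - k)"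
    using cn by (metis of_nat_mult)
  have e: "n - k = Suc (n - Suc k)" using assms by simp
  have "bb n x (Suc k) * real (Suc k) * (1 - x)
      = (real (n choose Suc k) * real (Suc k)) * x ^ k * x * (1 - x) ^ (n - Suc k) * (1 - x)"
    unfolding bb_def by (simp add: algebra_simps)
  also have "\<dots> = (real (n choose k) * real (n - k)) * x ^ k * x * (1 - x) ^ (n - Suc k) * (1 - x)"
    unfolding c ..
  also have "\<dots> = bb n x k * real (n - k) * x"
    unfolding bb_def e by (simp add: algebra_simps)
  finally show ?thesis .
qed

lemma bt_bb: "bt n a x = (\<Sum>k\<in>{a..n}. bb n x k)"
  unfolding bt_def bb_def ..

lemma bb_total: "(\<Sum>k\<in>{0..n}. bb n x k) = 1"
  unfolding bb_def by (rule binom_total)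

lemma quad_ineq:
  fixes m N i :: real
  assumes "0 \<le> i" "i \<le> m" "m \<le> N"
  shows "(m - i) * (m + i) * N^2 \<le> (N + i + 1) * (N - i + 1) * m^2"
proof -
  have "i^2 * (m^2 - N^2) \<le> 0"
    using assms by (intro mult_nonneg_nonpos) (auto intro!: power_mono)
  moreover have "0 \<le> m^2 * (2 * N + 1)" using assms by simp
  ultimately show ?thesis by (simp add: algebra_simps power2_eq_square)
qed

lemma div_eq_helper:
  fixes a b M N r :: real
  assumes "0 < r" "a * (N / r) = b * (M / r)"
  shows "a * N = b * M"
proof -
  have "a * N / r = b * M / r" using assms(2) by simp
  then show ?thesis using assms(1) by (simp add: divide_cancel_right)
qed

lemma median_pair:
  assumes m1: "1 \<le> m" and mn: "2 * m \<le> n" and jm: "j < m"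
  shows "bb n (real m / real n) (m - Suc j) \<le> bb n (real m / real n) (m + j)"
  using jm
proof (induction j)
  let ?p = "real m / real n"
  define M where "M = real m"
  define N where "N = real (n - m)"
  have n0: "0 < real n" using m1 mn by simp
  have p0: "0 < ?p" "?p < 1" using m1 mn by (auto simp: field_simps)
  have P: "?p = M / real n" by (simp add: M_def)
  have Q: "1 - ?p = N / real n" using n0 mn by (simp add: field_simps of_nat_diff N_def)
  have Q2: "1 - M / real n = N / real n" using Q by (simp add: M_def)
  case 0
  have s: "bb n ?p (Suc (m - 1)) * real (Suc (m - 1)) * (1 - ?p) = bb n ?p (m - 1) * real (n - (m - 1)) * ?p"
    by (rule bb_step) (use m1 mn in auto)
  have e1: "Suc (m - 1) = m" using m1 by simp
  have e2: "real (n - (m - 1)) = N + 1" using m1 mn by (simp add: of_nat_diff N_def)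
  have "(bb n ?p m * M) * (N / real n) = (bb n ?p (m - 1) * (N + 1)) * (M / real n)"
    using s unfolding e1 e2 P Q2 M_def[symmetric] by simp
  then have "(bb n ?p m * M) * N = (bb n ?p (m - 1) * (N + 1)) * M"
    by (rule div_eq_helper[OF n0])
  then have e: "bb n ?p m * N = bb n ?p (m - 1) * (N + 1)"
    using m1 by (simp add: M_def)
  have b0: "0 \<le> bb n ?p (m - 1)" using p0 by (intro bb_nonneg) auto
  have "bb n ?p (m - 1) * N \<le> bb n ?p m * N"
    using e b0 by (simp add: algebra_simps)
  moreover have "0 < N" using m1 mn by (simp add: N_def)
  ultimately show ?case by simp
next
  let ?p = "real m / real n"
  define M where "M = real m"
  define N where "N = real (n - m)"
  have n0: "0 < real n" using m1 mn by simp
  have p0: "0 < ?p" "?p < 1" using m1 mn by (auto simp: field_simps)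
  have P: "?p = M / real n" by (simp add: M_def)
  have Q: "1 - ?p = N / real n" using n0 mn by (simp add: field_simps of_nat_diff N_def)
  have Q2: "1 - M / real n = N / real n" using Q by (simp add: M_def)
  case (Suc j)
  let ?u = "bb n ?p (m - Suc j)" and ?v = "bb n ?p (m + j)"
  let ?X = "bb n ?p (m - Suc (Suc j))" and ?Y = "bb n ?p (m + Suc j)"
  have uv: "?u \<le> ?v" using Suc.IH Suc.prems by simp
  have u0: "0 \<le> ?u" using p0 by (intro bb_nonneg) auto
  have s1: "bb n ?p (Suc (m - Suc (Suc j))) * real (Suc (m - Suc (Suc j))) * (1 - ?p)
      = ?X * real (n - (m - Suc (Suc j))) * ?p"
    by (rule bb_step) (use Suc.prems mn in auto)
  have s2: "?Y * real (Suc (m + j)) * (1 - ?p) = ?v * real (n - (m + j)) * ?p"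
    using bb_step[of "m + j" n ?p] Suc.prems mn by simp
  define i where "i = real (Suc j)"
  have f1: "Suc (m - Suc (Suc j)) = m - Suc j" using Suc.prems by simp
  have A1: "real (m - Suc j) = M - i" using Suc.prems by (simp add: M_def i_def of_nat_diff)
  have C1: "real (n - (m - Suc (Suc j))) = N + i + 1" using Suc.prems mn
    by (simp add: N_def i_def of_nat_diff)
  have A2: "real (Suc (m + j)) = M + i" by (simp add: M_def i_def)
  have C2: "real (n - (m + j)) = N - i + 1" using Suc.prems mn by (simp add: N_def i_def of_nat_diff)
  have iM: "0 \<le> i" "i \<le> M" "M \<le> N" using Suc.prems mn by (auto simp: i_def M_def N_def of_nat_diff)
  have qi: "(M - i) * (M + i) * N^2 \<le> (N + i + 1) * (N - i + 1) * M^2"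
    by (rule quad_ineq) (use iM in auto)
  have Npos: "0 < N + i + 1" "0 < M + i" "0 < M" "0 < N" using iM m1 by (auto simp: M_def)
  have "(?u * (M - i)) * (N / real n) = (?X * (N + i + 1)) * (M / real n)"
    using s1 unfolding f1 A1 C1 P Q2 by simp
  then have E1: "?u * (M - i) * N = ?X * (N + i + 1) * M"
    by (rule div_eq_helper[OF n0])
  have "(?Y * (M + i)) * (N / real n) = (?v * (N - i + 1)) * (M / real n)"
    using s2 unfolding A2 C2 P Q2 by simp
  then have E2: "?Y * (M + i) * N = ?v * (N - i + 1) * M"
    by (rule div_eq_helper[OF n0])
  have key1: "?X * ((N + i + 1) * M * ((M + i) * N)) = ?u * ((M - i) * (M + i) * N^2)"
  proof -
    have "?X * ((N + i + 1) * M * ((M + i) * N)) = (?X * (N + i + 1) * M) * ((M + i) * N)"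
      by (simp only: mult_ac)
    also have "\<dots> = (?u * (M - i) * N) * ((M + i) * N)" by (simp only: E1)
    also have "\<dots> = ?u * ((M - i) * (M + i) * N^2)" by (simp only: mult_ac power2_eq_square)
    finally show ?thesis .
  qed
  have key2: "?Y * ((N + i + 1) * M * ((M + i) * N)) = ?v * ((N + i + 1) * (N - i + 1) * M^2)"
  proof -
    have "?Y * ((N + i + 1) * M * ((M + i) * N)) = (?Y * (M + i) * N) * ((N + i + 1) * M)"
      by (simp only: mult_ac)
    also have "\<dots> = (?v * (N - i + 1) * M) * ((N + i + 1) * M)" by (simp only: E2)
    also have "\<dots> = ?v * ((N + i + 1) * (N - i + 1) * M^2)" by (simp only: mult_ac power2_eq_square)
    finally show ?thesis .
  qed
  have qn: "0 \<le> (M - i) * (M + i) * N^2" using iM Npos by simp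
  have "?u * ((M - i) * (M + i) * N^2) \<le> ?v * ((M - i) * (M + i) * N^2)"
    using uv qn by (rule mult_right_mono)
  also have "\<dots> \<le> ?v * ((N + i + 1) * (N - i + 1) * M^2)"
    using qi u0 uv by (intro mult_left_mono) auto
  finally have "?X * ((N + i + 1) * M * ((M + i) * N)) \<le> ?Y * ((N + i + 1) * M * ((M + i) * N))"
    unfolding key1 key2 .
  moreover have "0 < (N + i + 1) * M * ((M + i) * N)"
    using Npos by simp
  ultimately show ?case by (rule mult_right_le_imp_le)
qed


lemma median_easy:
  assumes m1: "1 \<le> m" and mn: "2 * m \<le> n"
  shows "1/2 \<le> bt n m (real m / real n)"
proof -
  let ?p = "real m / real n"
  have p0: "0 \<le> ?p" "?p \<le> 1" using m1 mn by (auto simp: field_simps)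
  have L: "(\<Sum>k<m. bb n ?p k) = (\<Sum>j<m. bb n ?p (m - Suc j))"
    by (rule sum.nat_diff_reindex[symmetric])
  also have "\<dots> \<le> (\<Sum>j<m. bb n ?p (m + j))"
    by (intro sum_mono median_pair[OF m1 mn]) auto
  also have "\<dots> = (\<Sum>k\<in>{m..<m+m}. bb n ?p k)"
    using sum.shift_bounds_nat_ivl[of "bb n ?p" 0 m m] by (simp add: lessThan_atLeast0 add.commute)
  also have "\<dots> \<le> (\<Sum>k\<in>{m..n}. bb n ?p k)"
    by (rule sum_mono2) (use mn p0 in \<open>auto intro: bb_nonneg\<close>)
  finally have le: "(\<Sum>k<m. bb n ?p k) \<le> bt n m ?p" unfolding bt_bb .
  have "{0..n} = {..<m} \<union> {m..n}" using mn by auto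
  then have "(\<Sum>k\<in>{0..n}. bb n ?p k) = (\<Sum>k<m. bb n ?p k) + (\<Sum>k\<in>{m..n}. bb n ?p k)"
    by (simp add: sum.union_disjoint ivl_disj_int)
  then have "1 = (\<Sum>k<m. bb n ?p k) + bt n m ?p" unfolding bt_bb bb_total .
  then show ?thesis using le by linarith
qed

lemma ratio_ineq:
  fixes c u x L :: real
  assumes "0 < u" "u \<le> c" "0 \<le> x" "x < u" "0 < L"
  shows "L * c / (c - x) + L * c / (c + x) \<le> L * u / (u + x) + L * u / (u - x)"
proof -
  have c1: "0 < c - x" "0 < c + x" "0 < u + x" "0 < u - x" using assms by auto
  have e1: "L * c / (c - x) + L * c / (c + x) = (2 * L * (c * c)) / ((c - x) * (c + x))"
    using c1 by (simp add: field_simps)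
  have e2: "L * u / (u + x) + L * u / (u - x) = (2 * L * (u * u)) / ((u - x) * (u + x))"
    using c1 by (simp add: field_simps)
  have d1: "0 < (c - x) * (c + x)" "0 < (u - x) * (u + x)" using c1 by simp_all
  have uc: "u * u \<le> c * c" using assms by (intro mult_mono) auto
  have "x * x * (u * u) \<le> x * x * (c * c)" using uc by (intro mult_left_mono) auto
  then have key: "(c * c) * ((u - x) * (u + x)) \<le> (u * u) * ((c - x) * (c + x))"
    by (simp add: algebra_simps)
  have "(2 * L * (c * c)) * ((u - x) * (u + x)) \<le> (2 * L * (u * u)) * ((c - x) * (c + x))"
    using key assms by (simp add: mult.assoc)
  then have "(2 * L * (c * c)) / ((c - x) * (c + x)) \<le> (2 * L * (u * u)) / ((u - x) * (u + x))"
    using d1 by (simp add: divide_simps)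
  then show ?thesis unfolding e1 e2 .
qed


lemma ln_h:
  fixes y z :: real
  assumes "0 < y" "0 < z"
  shows "ln (y ^ a * z ^ b) = real a * ln y + real b * ln z"
  using assms by (simp add: ln_mult ln_realpow)

lemma h_sym:
  assumes mn: "n + 1 \<le> 2 * m" "m < n"
  and s: "0 \<le> s" "s \<le> 1 - (real m - 1) / (real n - 1)"
  defines "c \<equiv> (real m - 1) / (real n - 1)"
  shows "bdens n m (c + s) \<le> bdens n m (c - s)"
proof -
  define A where "A = real (m - 1)"
  define B where "B = real (n - m)"
  define L where "L = real n - 1"
  define u where "u = 1 - c"
  have m2: "2 \<le> m" using mn by simp
  have L0: "0 < L" using mn by (simp add: L_def)
  have LAB: "L = A + B" using mn m2 by (simp add: L_def A_def B_def of_nat_diff)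
  have cA: "L * c = A" using L0 m2 by (simp add: c_def L_def A_def of_nat_diff)
  have uB: "L * u = B" using cA LAB L0 by (simp add: u_def algebra_simps)
  have B1: "1 \<le> B" using mn by (simp add: B_def)
  have BA: "B \<le> A" using mn by (simp add: A_def B_def of_nat_diff)
  have "0 < L * u" using uB B1 by simp
  then have u0: "0 < u" using L0 zero_less_mult_pos by blast
  have "L * u \<le> L * c" using uB cA BA by simp
  then have uc: "u \<le> c" using L0 by simp
  have su: "s \<le> u" using s by (simp add: u_def c_def)
  let ?h = "\<lambda>t. t ^ (m - 1) * (1 - t) ^ (n - m)"
  have bd: "bdens n m t = (real n * real ((n - 1) choose (m - 1))) * ?h t" for t
    by (simp add: bdens_def mult.assoc)
  have K0: "0 \<le> real n * real ((n - 1) choose (m - 1))" by simp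
  have main: "?h (c + s) \<le> ?h (c - s)"
  proof (cases "s = u")
    case True
    have "?h (c + s) = 0" using True mn by (simp add: u_def)
    moreover have "0 \<le> ?h (c - s)" using True uc su u0 by (simp add: u_def)
    ultimately show ?thesis by linarith
  next
    case False
    then have su': "s < u" using su by simp
    show ?thesis
    proof (cases "s = 0")
      case True then show ?thesis by simp
    next
      case False
      then have s0: "0 < s" using s by simp
      define d where "d t = A * (ln (c - t) - ln (c + t)) + B * (ln (u + t) - ln (u - t))" for t
      define d' where "d' t = A * (1 / (c - t) * (-1) - 1 / (c + t)) + B * (1 / (u + t) - 1 / (u - t) * (-1))" for t
      have der: "(d has_real_derivative d' t) (at t)" if t: "0 \<le> t" "t \<le> s" for t
      proof -
        have p: "0 < c - t" "0 < c + t" "0 < u + t" "0 < u - t" using t su' uc u0 by auto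
        have g1: "((\<lambda>t. c - t) has_real_derivative -1) (at t)"
          by (rule derivative_eq_intros refl)+ simp
        have g2: "((\<lambda>t. c + t) has_real_derivative 1) (at t)"
          by (rule derivative_eq_intros refl)+ simp
        have g3: "((\<lambda>t. u + t) has_real_derivative 1) (at t)"
          by (rule derivative_eq_intros refl)+ simp
        have g4: "((\<lambda>t. u - t) has_real_derivative -1) (at t)"
          by (rule derivative_eq_intros refl)+ simp
        have l1: "((\<lambda>t. ln (c - t)) has_real_derivative 1 / (c - t) * (-1)) (at t)"
          using DERIV_chain2[OF DERIV_ln_divide[OF p(1)] g1] .
        have l2: "((\<lambda>t. ln (c + t)) has_real_derivative 1 / (c + t) * 1) (at t)"
          using DERIV_chain2[OF DERIV_ln_divide[OF p(2)] g2] .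
        have l3: "((\<lambda>t. ln (u + t)) has_real_derivative 1 / (u + t) * 1) (at t)"
          using DERIV_chain2[OF DERIV_ln_divide[OF p(3)] g3] .
        have l4: "((\<lambda>t. ln (u - t)) has_real_derivative 1 / (u - t) * (-1)) (at t)"
          using DERIV_chain2[OF DERIV_ln_divide[OF p(4)] g4] .
        have "((\<lambda>t. A * (ln (c - t) - ln (c + t)) + B * (ln (u + t) - ln (u - t))) has_real_derivative
            A * (1 / (c - t) * (-1) - 1 / (c + t) * 1) + B * (1 / (u + t) * 1 - 1 / (u - t) * (-1))) (at t)"
          by (intro DERIV_add DERIV_cmult DERIV_diff l1 l2 l3 l4)
        then show ?thesis unfolding d_def[abs_def] d'_def by simp
      qed
      have "\<exists>z. 0 < z \<and> z < s \<and> d s - d 0 = (s - 0) * d' z"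
        by (rule MVT2[OF s0, of d d']) (rule der, auto)
      then obtain z where z: "0 < z" "z < s" "d s - d 0 = (s - 0) * d' z" by blast
      have "L * c / (c - z) + L * c / (c + z) \<le> L * u / (u + z) + L * u / (u - z)"
        by (rule ratio_ineq) (use u0 uc z su' L0 in auto)
      then have "0 \<le> d' z" unfolding d'_def cA uB by (simp add: algebra_simps)
      then have "0 \<le> d s - d 0" using z s0 by simp
      moreover have "d 0 = 0" by (simp add: d_def)
      ultimately have ds: "0 \<le> d s" by simp
      have p: "0 < c - s" "0 < c + s" "0 < u + s" "0 < u - s" using s su' uc u0 by auto
      have e1: "1 - (c - s) = u + s" "1 - (c + s) = u - s" by (simp_all add: u_def)
      have "ln (?h (c + s)) = A * ln (c + s) + B * ln (u - s)"
        unfolding e1 A_def B_def using p by (intro ln_h) auto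
      moreover have "ln (?h (c - s)) = A * ln (c - s) + B * ln (u + s)"
        unfolding e1 A_def B_def using p by (intro ln_h) auto
      ultimately have "ln (?h (c + s)) \<le> ln (?h (c - s))"
        using ds unfolding d_def by (simp add: algebra_simps)
      moreover have "0 < ?h (c + s)" "0 < ?h (c - s)" using p e1 by simp_all
      ultimately show ?thesis by simp
    qed
  qed
  show ?thesis unfolding bd using main K0 by (rule mult_left_mono)
qed


lemma median_hard:
  assumes mn: "n + 1 \<le> 2 * m" "m < n"
  shows "1/2 \<le> bt n m ((real m - 1) / (real n - 1))"
proof -
  define c where "c = (real m - 1) / (real n - 1)"
  define u where "u = 1 - c"
  have n1: "1 < real n" using mn by simp
  have c1: "c < 1" using mn n1 by (simp add: c_def field_simps)
  have c2: "1/2 \<le> c" using mn n1 by (simp add: c_def field_simps)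
  have u0: "0 < u" using c1 by (simp add: u_def)
  have m1: "1 \<le> m" "m \<le> n" using mn by auto
  define phi where "phi s = 2 * bt n m c - bt n m (c - s) - bt n m (c + s)" for s
  define phi' where "phi' s = - (bdens n m (c - s) * (-1)) - bdens n m (c + s) * 1" for s
  have der: "(phi has_real_derivative phi' s) (at s)" for s
  proof -
    have g1: "((\<lambda>t. c - t) has_real_derivative -1) (at s)"
      by (rule derivative_eq_intros refl)+ simp
    have g2: "((\<lambda>t. c + t) has_real_derivative 1) (at s)"
      by (rule derivative_eq_intros refl)+ simp
    have d1: "((\<lambda>t. bt n m (c - t)) has_real_derivative bdens n m (c - s) * (-1)) (at s)"
      using DERIV_chain2[OF bt_deriv[OF m1] g1] .
    have d2: "((\<lambda>t. bt n m (c + t)) has_real_derivative bdens n m (c + s) * 1) (at s)"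
      using DERIV_chain2[OF bt_deriv[OF m1] g2] .
    have "((\<lambda>t. 2 * bt n m c - bt n m (c - t) - bt n m (c + t)) has_real_derivative
       0 - bdens n m (c - s) * (-1) - bdens n m (c + s) * 1) (at s)"
      by (intro DERIV_diff DERIV_const d1 d2)
    then show ?thesis unfolding phi_def[abs_def] phi'_def by simp
  qed
  have "\<exists>z. 0 < z \<and> z < u \<and> phi u - phi 0 = (u - 0) * phi' z"
    by (rule MVT2[OF u0, of phi phi']) (rule der)
  then obtain z where z: "0 < z" "z < u" "phi u - phi 0 = (u - 0) * phi' z" by blast
  have "bdens n m (c + z) \<le> bdens n m (c - z)"
    unfolding c_def by (rule h_sym[OF mn]) (use z in \<open>auto simp: u_def c_def\<close>)
  then have "0 \<le> phi' z" by (simp add: phi'_def)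
  then have "0 \<le> phi u - phi 0" using z u0 by simp
  moreover have "phi 0 = 0" by (simp add: phi_def)
  moreover have "bt n m (c + u) = 1" using bt_one[of m n] mn by (simp add: u_def)
  moreover have "0 \<le> bt n m (c - u)" using c1 c2 by (intro bt_nonneg) (auto simp: u_def)
  ultimately have "1 \<le> 2 * bt n m c" by (simp add: phi_def)
  then show ?thesis by (simp add: c_def)
qed

lemma median:
  assumes "1 \<le> m" "m \<le> n"
  shows "1/2 \<le> bt n m (real m / real n)"
proof -
  consider "m = n" | "2 * m \<le> n" | "n + 1 \<le> 2 * m" "m < n" using assms by linarith
  then show ?thesis
  proof cases
    case 1 then show ?thesis using assms bt_one[of n n] by simp
  next
    case 2 then show ?thesis using median_easy assms by blast
  next
    case 3
    have n1: "1 < real n" using 3 by simp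
    have le: "(real m - 1) / (real n - 1) \<le> real m / real n"
      using 3 n1 by (simp add: field_simps)
    have "0 \<le> (real m - 1) / (real n - 1)" using assms n1 by simp
    then have "bt n m ((real m - 1) / (real n - 1)) \<le> bt n m (real m / real n)"
      using le assms by (intro bt_mono) (auto simp: field_simps)
    then show ?thesis using median_hard[OF 3] by simp
  qed
qed

lemma median_below:
  assumes "1 \<le> j" "j \<le> n" "0 \<le> p" "p \<le> 1" "real j \<le> real n * p"
  shows "1/2 \<le> bt n j p"
proof -
  have n0: "0 < real n" using assms by simp
  have "real j / real n \<le> p" using assms n0 by (simp add: field_simps)
  then have "bt n j (real j / real n) \<le> bt n j p"
    using assms by (intro bt_mono) auto
  then show ?thesis using median[OF assms(1,2)] by simp
qed



lemma bt_FTC: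
  assumes a: "1 \<le> a" "a \<le> n" and x: "0 \<le> x"
  shows "(LBINT t=0..x. bdens n a t) = bt n a x - bt n a 0"
proof -
  have "(LBINT t=(ereal 0)..x. bdens n a t) = bt n a x - bt n a 0"
  proof (rule interval_integral_FTC_finite)
    show "continuous_on {min 0 x..max 0 x} (bdens n a)"
      unfolding bdens_def by (intro continuous_intros)
    fix t
    show "(bt n a has_vector_derivative bdens n a t) (at t within {min 0 x..max 0 x})"
      using bt_deriv[OF a, of t] unfolding has_real_derivative_iff_has_vector_derivative[symmetric]
      by (rule DERIV_subset) simp
  qed
  then show ?thesis by (simp add: zero_ereal_def)
qed

lemma beta_bt:
  assumes k: "2 \<le> k" "k \<le> n" and x: "0 \<le> x" "x \<le> 1"
  shows "reg_inc_beta x (real k - 1) (real n - real k + 2) = bt n (k - 1) x"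
proof -
  define a where "a = k - 1"
  have a: "1 \<le> a" "a \<le> n" using k by (auto simp: a_def)
  define K where "K = real n * real ((n - 1) choose (a - 1))"
  have K0: "0 < K" using a by (simp add: K_def)
  let ?f = "\<lambda>t. t powr (real k - 1 - 1) * (1 - t) powr (real n - real k + 2 - 1)"
  have e1: "real k - 1 - 1 = real (a - 1)" using k by (simp add: a_def of_nat_diff)
  have e2: "real n - real k + 2 - 1 = real (n - a)" using k by (simp add: a_def of_nat_diff)
  have fg: "?f t = bdens n a t / K" if "0 < t" "t < 1" for t
  proof -
    have "?f t = t ^ (a - 1) * (1 - t) ^ (n - a)"
      using that unfolding e1 e2 by (simp add: powr_realpow)
    also have "\<dots> = bdens n a t / K"
      using K0 unfolding bdens_def K_def[symmetric] by (simp add: field_simps)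
    finally show ?thesis .
  qed
  have I: "(LBINT t=0..y. ?f t) = bt n a y / K" if y: "0 \<le> y" "y \<le> 1" for y
  proof -
    have "(LBINT t=0..y. ?f t) = (LBINT t=0..y. bdens n a t / K)"
    proof (rule interval_integral_cong)
      fix t assume "t \<in> einterval (min 0 (ereal y)) (max 0 (ereal y))"
      then have "0 < t" "t < y" using y by (auto simp: einterval_def min_def max_def)
      then show "?f t = bdens n a t / K" using y by (intro fg) auto
    qed
    also have "\<dots> = (LBINT t=0..y. bdens n a t) / K"
      by (rule interval_lebesgue_integral_divide)
    also have "\<dots> = bt n a y / K" using bt_FTC[OF a y(1)] bt_zero[OF a(1)] by simp
    finally show ?thesis .
  qed
  have I1: "(LBINT t=0..1. ?f t) = bt n a 1 / K"
    using I[of 1] unfolding one_ereal_def by simp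
  have "reg_inc_beta x (real k - 1) (real n - real k + 2) = (bt n a x / K) / (bt n a 1 / K)"
    unfolding reg_inc_beta_def I[OF x] I1 ..
  also have "\<dots> = bt n a x" using bt_one[OF a(2)] K0 by simp
  finally show ?thesis by (simp add: a_def)
qed


lemma qhat_char:
  assumes k: "2 \<le> k" "k \<le> n" and al: "0 \<le> \<alpha>" "\<alpha> \<le> 1"
  shows "q_hat n \<alpha> k \<in> {0..1} \<and> bt n (k - 1) (q_hat n \<alpha> k) = \<alpha>"
proof -
  define a where "a = k - 1"
  have a: "1 \<le> a" "a \<le> n" using k by (auto simp: a_def)
  have ex: "\<exists>x. 0 \<le> x \<and> x \<le> 1 \<and> bt n a x = \<alpha>"
    by (rule IVT) (use al bt_zero[OF a(1)] bt_one[OF a(2)] bt_isCont in auto)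
  have uniq: "x = y" if "x \<in> {0..1}" "bt n a x = \<alpha>" "y \<in> {0..1}" "bt n a y = \<alpha>" for x y
  proof (rule ccontr)
    assume "x \<noteq> y"
    then consider "x < y" | "y < x" by linarith
    then show False
    proof cases
      case 1 then show False using bt_strict_mono[OF a, of x y] that by auto
    next
      case 2 then show False using bt_strict_mono[OF a, of y x] that by auto
    qed
  qed
  have ex1: "\<exists>!x. x \<in> {0..1} \<and> bt n a x = \<alpha>" using ex uniq by auto
  have P: "(\<lambda>x. x \<in> {0..1} \<and> reg_inc_beta x (real k - 1) (real n - real k + 2) = \<alpha>)
         = (\<lambda>x. x \<in> {0..1} \<and> bt n a x = \<alpha>)"
    using beta_bt[OF k] by (auto simp: a_def fun_eq_iff)
  have "real k - 1 \<noteq> 0" using k by simp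
  then have "q_hat n \<alpha> k = (THE x. x \<in> {0..1} \<and> bt n a x = \<alpha>)"
    using k unfolding q_hat_def reg_inc_beta_inv_def P by simp
  then show ?thesis using theI'[OF ex1] by (simp add: a_def)
qed

lemma qhat_gt:
  assumes k: "2 \<le> k" "k \<le> n" and al: "0 \<le> \<alpha>" "\<alpha> \<le> 1" and p: "0 \<le> p" "p < q_hat n \<alpha> k"
  shows "bt n (k - 1) p < \<alpha>"
proof -
  have c: "q_hat n \<alpha> k \<in> {0..1}" "bt n (k - 1) (q_hat n \<alpha> k) = \<alpha>" using qhat_char[OF k al] by auto
  have "bt n (k - 1) p < bt n (k - 1) (q_hat n \<alpha> k)"
    using k p c by (intro bt_strict_mono) auto
  then show ?thesis using c by simp
qed



lemma cont_coord [continuous_intros]: "continuous_on S (\<lambda>x::'a \<Rightarrow> 'b::topological_space. x i)"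
  by (rule continuous_on_subset[OF continuous_on_product_coordinates]) simp

lemma psum_continuous: "finite I \<Longrightarrow> continuous_on S (\<lambda>q. psum I q P)"
  unfolding psum_def pw_def by (intro continuous_intros)

lemma compact_box:
  assumes "\<And>i. compact (S i)"
  shows "compact (PiE UNIV S :: (nat \<Rightarrow> real) set)"
proof -
  have "compactin (product_topology (\<lambda>i. euclidean) UNIV) (PiE UNIV S)"
    using assms by (simp add: compactin_PiE)
  then show ?thesis by (simp add: euclidean_product_topology)
qed

lemma exists_special_max:
  fixes g V :: "'a::topological_space \<Rightarrow> real"
  assumes D: "compact D" "D \<noteq> {}" and g: "continuous_on UNIV g" and V: "continuous_on UNIV V"
  shows "\<exists>q\<in>D. (\<forall>q'\<in>D. g q' \<le> g q) \<and> (\<forall>q'\<in>D. g q \<le> g q' \<longrightarrow> V q \<le> V q')"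
proof -
  obtain q0 where q0: "q0 \<in> D" "\<forall>y\<in>D. g y \<le> g q0"
    using continuous_attains_sup[OF D continuous_on_subset[OF g]] by auto
  define Dm where "Dm = D \<inter> {q. g q0 \<le> g q}"
  have "closed {q. g q0 \<le> g q}" by (rule closed_Collect_le) (use g in auto)
  then have "compact Dm" unfolding Dm_def using D(1) by blast
  moreover have "Dm \<noteq> {}" using q0 by (auto simp: Dm_def)
  ultimately obtain q where q: "q \<in> Dm" "\<forall>y\<in>Dm. V q \<le> V y"
    using continuous_attains_inf[of Dm V] continuous_on_subset[OF V] by blast
  have "q \<in> D" "g q0 \<le> g q" using q by (auto simp: Dm_def)
  moreover have "\<forall>q'\<in>D. g q' \<le> g q" using q0 \<open>g q0 \<le> g q\<close> by auto
  moreover have "\<forall>q'\<in>D. g q \<le> g q' \<longrightarrow> V q \<le> V q'"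
    using q \<open>g q0 \<le> g q\<close> by (auto simp: Dm_def)
  ultimately show ?thesis by blast
qed

definition pairval :: "real \<Rightarrow> real \<Rightarrow> real \<Rightarrow> real \<Rightarrow> real \<Rightarrow> real" where
  "pairval G0 G1 G2 x y = (1 - x) * (1 - y) * G0 + ((1 - x) * y + x * (1 - y)) * G1 + x * y * G2"

lemma psum_pair:
  assumes "finite I" "i \<in> I" "j \<in> I" "i \<noteq> j"
  shows "psum I q P = pairval (psum (I - {i, j}) q P) (psum (I - {i, j}) q (\<lambda>c. P (Suc c)))
                         (psum (I - {i, j}) q (\<lambda>c. P (Suc (Suc c)))) (q i) (q j)"
proof -
  let ?J = "I - {i, j}"
  have I: "I = insert i (insert j ?J)" using assms by auto
  have f: "finite ?J" using assms by simp
  have "psum I q P = (1 - q i) * psum (insert j ?J) q P + q i * psum (insert j ?J) q (\<lambda>c. P (Suc c))"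
    by (subst I, rule psum_insert) (use f assms in auto)
  also have "psum (insert j ?J) q P = (1 - q j) * psum ?J q P + q j * psum ?J q (\<lambda>c. P (Suc c))"
    by (rule psum_insert) (use f in auto)
  also have "psum (insert j ?J) q (\<lambda>c. P (Suc c)) = (1 - q j) * psum ?J q (\<lambda>c. P (Suc c)) + q j * psum ?J q (\<lambda>c. P (Suc (Suc c)))"
    by (rule psum_insert) (use f in auto)
  finally show ?thesis unfolding pairval_def by (simp add: algebra_simps)
qed

lemma pairval_diff:
  assumes "x' + y' = x + y"
  shows "pairval G0 G1 G2 x' y' - pairval G0 G1 G2 x y = (x' * y' - x * y) * (G0 - 2 * G1 + G2)"
proof -
  have e: "pairval G0 G1 G2 x y = G0 + (x + y) * (G1 - G0) + x * y * (G0 - 2 * G1 + G2)" for x y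
    unfolding pairval_def by (simp add: algebra_simps)
  have "pairval G0 G1 G2 x' y' - pairval G0 G1 G2 x y
      = (x' + y' - (x + y)) * (G1 - G0) + (x' * y' - x * y) * (G0 - 2 * G1 + G2)"
    unfolding e by (simp add: algebra_simps)
  then show ?thesis using assms by simp
qed

lemma sum_pair_update:
  fixes q :: "nat \<Rightarrow> real"
  assumes "finite I" "i \<in> I" "j \<in> I" "i \<noteq> j"
  shows "(\<Sum>l\<in>I. (q(i := x, j := y)) l) = (\<Sum>l\<in>I. q l) - q i - q j + x + y"
proof -
  let ?J = "I - {i, j}"
  have I: "I = insert i (insert j ?J)" using assms by auto
  have f: "finite ?J" using assms by simp
  have s: "(\<Sum>l\<in>I. f l) = f i + f j + (\<Sum>l\<in>?J. f l)" for f :: "nat \<Rightarrow> real"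
    by (subst I) (use f assms in \<open>simp add: sum.insert_if\<close>)
  have J: "(\<Sum>l\<in>?J. (q(i := x, j := y)) l) = (\<Sum>l\<in>?J. q l)" by (rule sum.cong) auto
  have "(\<Sum>l\<in>I. (q(i := x, j := y)) l) = (q(i := x, j := y)) i + (q(i := x, j := y)) j + (\<Sum>l\<in>?J. (q(i := x, j := y)) l)"
    by (rule s)
  also have "\<dots> = x + y + (\<Sum>l\<in>?J. q l)" using assms J by simp
  finally show ?thesis using s[of q] by simp
qed



definition cf :: "nat set \<Rightarrow> (nat \<Rightarrow> real) \<Rightarrow> nat \<Rightarrow> nat \<Rightarrow> nat \<Rightarrow> real" where
  "cf I q k i j = psum (I - {i, j}) q (\<lambda>c. k \<le> c) - 2 * psum (I - {i, j}) q (\<lambda>c. k \<le> Suc c)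
      + psum (I - {i, j}) q (\<lambda>c. k \<le> Suc (Suc c))"

lemma g_change:
  assumes "finite I" "i \<in> I" "j \<in> I" "i \<noteq> j" "x + y = q i + q j"
  shows "psum I (q(i := x, j := y)) (\<lambda>c. k \<le> c) - psum I q (\<lambda>c. k \<le> c) = (x * y - q i * q j) * cf I q k i j"
proof -
  let ?J = "I - {i, j}" and ?q' = "q(i := x, j := y)"
  have c: "psum ?J ?q' P = psum ?J q P" for P by (rule psum_cong) auto
  have "psum I ?q' (\<lambda>c. k \<le> c) = pairval (psum ?J q (\<lambda>c. k \<le> c)) (psum ?J q (\<lambda>c. k \<le> Suc c))
                         (psum ?J q (\<lambda>c. k \<le> Suc (Suc c))) x y"
    using psum_pair[OF assms(1-4), of ?q' "\<lambda>c. k \<le> c"] assms(4) by (simp add: c)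
  moreover have "psum I q (\<lambda>c. k \<le> c) = pairval (psum ?J q (\<lambda>c. k \<le> c)) (psum ?J q (\<lambda>c. k \<le> Suc c))
                         (psum ?J q (\<lambda>c. k \<le> Suc (Suc c))) (q i) (q j)"
    using psum_pair[OF assms(1-4), of q "\<lambda>c. k \<le> c"] by simp
  ultimately show ?thesis using pairval_diff[OF assms(5)] unfolding cf_def by simp
qed

lemma cf_eq:
  assumes "finite I"
  shows "cf I q k i j = psum (I - {i, j}) q (\<lambda>c. Suc (Suc c) = k) - psum (I - {i, j}) q (\<lambda>c. Suc c = k)"
proof -
  let ?J = "I - {i, j}"
  have f: "finite ?J" using assms by simp
  have "psum ?J q (\<lambda>c. k \<le> Suc c) = psum ?J q (\<lambda>c. k \<le> Suc c \<and> k \<le> c) + psum ?J q (\<lambda>c. k \<le> Suc c \<and> \<not> k \<le> c)"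
    by (rule psum_split[OF f])
  also have "psum ?J q (\<lambda>c. k \<le> Suc c \<and> k \<le> c) = psum ?J q (\<lambda>c. k \<le> c)"
    by (rule psum_cong_P[OF _ f]) auto
  also have "psum ?J q (\<lambda>c. k \<le> Suc c \<and> \<not> k \<le> c) = psum ?J q (\<lambda>c. Suc c = k)"
    by (rule psum_cong_P[OF _ f]) auto
  finally have e1: "psum ?J q (\<lambda>c. k \<le> Suc c) = psum ?J q (\<lambda>c. k \<le> c) + psum ?J q (\<lambda>c. Suc c = k)" .
  have "psum ?J q (\<lambda>c. k \<le> Suc (Suc c)) = psum ?J q (\<lambda>c. k \<le> Suc (Suc c) \<and> k \<le> Suc c) + psum ?J q (\<lambda>c. k \<le> Suc (Suc c) \<and> \<not> k \<le> Suc c)"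
    by (rule psum_split[OF f])
  also have "psum ?J q (\<lambda>c. k \<le> Suc (Suc c) \<and> k \<le> Suc c) = psum ?J q (\<lambda>c. k \<le> Suc c)"
    by (rule psum_cong_P[OF _ f]) auto
  also have "psum ?J q (\<lambda>c. k \<le> Suc (Suc c) \<and> \<not> k \<le> Suc c) = psum ?J q (\<lambda>c. Suc (Suc c) = k)"
    by (rule psum_cong_P[OF _ f]) auto
  finally have e2: "psum ?J q (\<lambda>c. k \<le> Suc (Suc c)) = psum ?J q (\<lambda>c. k \<le> Suc c) + psum ?J q (\<lambda>c. Suc (Suc c) = k)" .
  show ?thesis unfolding cf_def e2 e1 by simp
qed

lemma config_psum:
  assumes "finite Z" "finite Os" "finite Mi" "Z \<inter> Os = {}" "Z \<inter> Mi = {}" "Os \<inter> Mi = {}"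
    "\<And>i. i \<in> Z \<Longrightarrow> q i = 0" "\<And>i. i \<in> Os \<Longrightarrow> q i = 1" "\<And>i. i \<in> Mi \<Longrightarrow> q i = a"
  shows "psum (Z \<union> Os \<union> Mi) q P = psum Mi (\<lambda>_. a) (\<lambda>c. P (c + card Os))"
proof -
  have "psum (Z \<union> (Os \<union> Mi)) q P = psum (Os \<union> Mi) q P"
    by (rule psum_zeros) (use assms in auto)
  also have "\<dots> = psum Mi q (\<lambda>c. P (c + card Os))"
    by (rule psum_ones) (use assms in auto)
  also have "\<dots> = psum Mi (\<lambda>_. a) (\<lambda>c. P (c + card Os))"
    by (rule psum_cong) (use assms in auto)
  finally show ?thesis by (simp add: Un_assoc)
qed

lemma psum_point:
  assumes "finite M"
  shows "psum M (\<lambda>_. a) (\<lambda>c. c + r + t = k) = (if r + t \<le> k then bb (card M) a (k - t - r) else 0)"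
proof -
  have S: "{c\<in>{0..card M}. c + r + t = k} = (if r + t \<le> k \<and> k - t - r \<le> card M then {k - t - r} else {})"
    by auto
  show ?thesis
    unfolding psum_const[OF assms] S bb_def
    by (auto simp: binomial_eq_0)
qed

lemma ratio_contra:
  fixes a :: real
  assumes a: "0 < a" "a < 1"
    and lt: "(if r + 2 \<le> k then bb m a (k - 2 - r) else 0) < (if r + 1 \<le> k then bb m a (k - 1 - r) else 0)"
  shows "real k - 1 - real r < real (m + 1) * a"
proof -
  have r1: "r + 1 \<le> k" using lt by (auto split: if_splits)
  show ?thesis
  proof (cases "r + 2 \<le> k")
    case False
    then have "k = r + 1" using r1 by simp
    then show ?thesis using a by simp
  next
    case True
    define y where "y = k - 2 - r"
    have y1: "k - 1 - r = Suc y" using True by (simp add: y_def)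
    have lt1: "bb m a (k - 2 - r) < bb m a (k - 1 - r)"
      using lt by (simp only: if_P[OF True] if_P[OF r1])
    have lt2: "bb m a y < bb m a (Suc y)" using lt1 unfolding y1 y_def[symmetric] .
    have b0: "0 \<le> bb m a y" using a by (intro bb_nonneg) auto
    have ym: "y < m"
    proof (rule ccontr)
      assume "\<not> y < m"
      then have "bb m a (Suc y) = 0" by (simp add: bb_def)
      then show False using lt2 b0 by simp
    qed
    have st: "bb m a (Suc y) * real (Suc y) * (1 - a) = bb m a y * real (m - y) * a"
      by (rule bb_step[OF ym])
    have pos: "0 < bb m a (Suc y)" using lt2 b0 by simp
    have mp: "0 < real (m - y) * a" using ym a by simp
    have "bb m a (Suc y) * (real (Suc y) * (1 - a)) = bb m a y * (real (m - y) * a)"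
      using st by (simp add: mult.assoc)
    also have "\<dots> < bb m a (Suc y) * (real (m - y) * a)"
      using lt2 mp by (rule mult_strict_right_mono)
    finally have "real (Suc y) * (1 - a) < real (m - y) * a"
      using pos by simp
    then have "real (Suc y) < real (m + 1) * a" using ym by (simp add: of_nat_diff algebra_simps)
    moreover have "real k - 1 - real r = real (Suc y)" using True by (simp add: y_def of_nat_diff)
    ultimately show ?thesis by simp
  qed
qed



lemma cf_config:
  fixes i j k :: nat and q :: "nat \<Rightarrow> real" and a :: real
  assumes fin: "finite I" and part: "I = Zs \<union> Os \<union> Mi"
    and dj: "Zs \<inter> Os = {}" "Zs \<inter> Mi = {}" "Os \<inter> Mi = {}"
    and qv: "\<And>i. i \<in> Zs \<Longrightarrow> q i = 0" "\<And>i. i \<in> Os \<Longrightarrow> q i = 1" "\<And>i. i \<in> Mi \<Longrightarrow> q i = a"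
  defines "r \<equiv> card (Os - {i, j})" and "m \<equiv> card (Mi - {i, j})"
  shows "cf I q k i j = (if r + 2 \<le> k then bb m a (k - 2 - r) else 0) - (if r + 1 \<le> k then bb m a (k - 1 - r) else 0)"
proof -
  have fZ: "finite Zs" "finite Os" "finite Mi" using fin part by auto
  have J: "I - {i, j} = (Zs - {i, j}) \<union> (Os - {i, j}) \<union> (Mi - {i, j})" using part by auto
  have fM: "finite (Mi - {i, j})" using fZ by simp
  have cp: "psum (I - {i, j}) q P = psum (Mi - {i, j}) (\<lambda>_. a) (\<lambda>c. P (c + r))" for P
    unfolding J r_def by (rule config_psum) (use fZ dj qv in auto)
  have p2: "psum (I - {i, j}) q (\<lambda>c. Suc (Suc c) = k) = (if r + 2 \<le> k then bb m a (k - 2 - r) else 0)"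
  proof -
    have "psum (I - {i, j}) q (\<lambda>c. Suc (Suc c) = k) = psum (Mi - {i, j}) (\<lambda>_. a) (\<lambda>c. c + r + 2 = k)"
      unfolding cp by (rule psum_cong_P[OF _ fM]) auto
    also have "\<dots> = (if r + 2 \<le> k then bb m a (k - 2 - r) else 0)"
      unfolding psum_point[OF fM] m_def ..
    finally show ?thesis .
  qed
  have p1: "psum (I - {i, j}) q (\<lambda>c. Suc c = k) = (if r + 1 \<le> k then bb m a (k - 1 - r) else 0)"
  proof -
    have "psum (I - {i, j}) q (\<lambda>c. Suc c = k) = psum (Mi - {i, j}) (\<lambda>_. a) (\<lambda>c. c + r + 1 = k)"
      unfolding cp by (rule psum_cong_P[OF _ fM]) auto
    also have "\<dots> = (if r + 1 \<le> k then bb m a (k - 1 - r) else 0)"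
      unfolding psum_point[OF fM] m_def ..
    finally show ?thesis .
  qed
  show ?thesis unfolding cf_eq[OF fin] p1 p2 ..
qed



lemma hoeffding:
  fixes q0 :: "nat \<Rightarrow> real" and k :: nat
  assumes fin: "finite I" and ne: "I \<noteq> {}"
    and q0: "\<And>i. i \<in> I \<Longrightarrow> 0 \<le> q0 i \<and> q0 i \<le> 1"
    and kb: "(\<Sum>i\<in>I. q0 i) + 1 \<le> real k"
  shows "psum I q0 (\<lambda>c. k \<le> c) \<le> psum I (\<lambda>_. (\<Sum>i\<in>I. q0 i) / real (card I)) (\<lambda>c. k \<le> c)"
proof -
  define \<mu> where "\<mu> = (\<Sum>i\<in>I. q0 i)"
  define n where "n = card I"
  have n0: "0 < n" using fin ne by (simp add: n_def card_gt_0_iff)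
  define S where "S i = (if i \<in> I then {0..1::real} else {0})" for i
  define D where "D = PiE UNIV S \<inter> {q. (\<Sum>i\<in>I. q i) = \<mu>}"
  have inD: "q \<in> D \<longleftrightarrow> (\<forall>i\<in>I. 0 \<le> q i \<and> q i \<le> 1) \<and> (\<forall>i. i \<notin> I \<longrightarrow> q i = 0) \<and> (\<Sum>i\<in>I. q i) = \<mu>" for q
    by (auto simp: D_def S_def PiE_def Pi_def)
  have cD: "compact D"
  proof -
    have "compact (PiE UNIV S :: (nat \<Rightarrow> real) set)" by (rule compact_box) (simp add: S_def)
    moreover have "closed {q::nat \<Rightarrow> real. (\<Sum>i\<in>I. q i) = \<mu>}"
      by (rule closed_Collect_eq) (intro continuous_intros)+
    ultimately show ?thesis unfolding D_def by blast
  qed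
  define q1 where "q1 i = (if i \<in> I then q0 i else 0)" for i
  have q1D: "q1 \<in> D" unfolding inD using q0 by (auto simp: q1_def \<mu>_def)
  define g where "g q = psum I q (\<lambda>c. k \<le> c)" for q
  define V where "V q = (\<Sum>i\<in>I. (q i)^2)" for q :: "nat \<Rightarrow> real"
  have gc: "continuous_on UNIV g" unfolding g_def by (rule psum_continuous[OF fin])
  have Vc: "continuous_on UNIV V" unfolding V_def by (intro continuous_intros)
  obtain q where qD: "q \<in> D" and qmax: "\<forall>q'\<in>D. g q' \<le> g q" and qmin: "\<forall>q'\<in>D. g q \<le> g q' \<longrightarrow> V q \<le> V q'"
    using exists_special_max[OF cD _ gc Vc] q1D by blast
  have qb: "\<And>i. i \<in> I \<Longrightarrow> 0 \<le> q i \<and> q i \<le> 1" and qo: "\<And>i. i \<notin> I \<Longrightarrow> q i = 0"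
    and qs: "(\<Sum>i\<in>I. q i) = \<mu>" using qD unfolding inD by auto
  have Pb: "cf I q k i j < 0" if ij: "i \<in> I" "j \<in> I" "q i \<noteq> q j" for i j
  proof (rule ccontr)
    assume "\<not> cf I q k i j < 0"
    then have cf0: "0 \<le> cf I q k i j" by simp
    have ineq: "i \<noteq> j" using ij by auto
    define m where "m = (q i + q j) / 2"
    define q' where "q' = q(i := m, j := m)"
    have mb: "0 \<le> m" "m \<le> 1" using qb[OF ij(1)] qb[OF ij(2)] by (auto simp: m_def)
    have sq': "(\<Sum>l\<in>I. q' l) = \<mu>"
      unfolding q'_def using sum_pair_update[OF fin ij(1,2) ineq, of q m m] qs by (simp add: m_def)
    have q'D: "q' \<in> D" unfolding inD
      using qb qo mb sq' ij by (auto simp: q'_def)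
    have ch: "g q' - g q = (m * m - q i * q j) * cf I q k i j"
      unfolding g_def q'_def by (rule g_change[OF fin ij(1,2) ineq]) (simp add: m_def)
    have "m * m - q i * q j = ((q i - q j) / 2)^2"
      by (simp add: m_def power2_eq_square field_simps)
    then have "0 \<le> m * m - q i * q j" by simp
    then have "g q \<le> g q'" using ch cf0 by (smt (verit) mult_nonneg_nonneg)
    then have Vle: "V q \<le> V q'" using qmin q'D by blast
    have sqf: "(\<lambda>l. (q' l)^2) = (\<lambda>l. (q l)^2)(i := m^2, j := m^2)"
      by (auto simp: q'_def fun_eq_iff)
    have "V q' = V q - (q i)^2 - (q j)^2 + m^2 + m^2"
      unfolding V_def sqf using sum_pair_update[OF fin ij(1,2) ineq, of "\<lambda>l. (q l)^2" "m^2" "m^2"] by simp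
    moreover have "m^2 + m^2 - (q i)^2 - (q j)^2 = - ((q i - q j)^2 / 2)"
      by (simp add: m_def power2_eq_square field_simps)
    moreover have "0 < (q i - q j)^2" using ij by simp
    ultimately have "V q' < V q" by linarith
    then show False using Vle by simp
  qed
  have Pa: "q i = 0 \<or> q j = 1" if ij: "i \<in> I" "j \<in> I" "q i < q j" for i j
  proof (rule ccontr)
    assume "\<not> (q i = 0 \<or> q j = 1)"
    then have qi0: "0 < q i" and qj1: "q j < 1" using qb[OF ij(1)] qb[OF ij(2)] by auto
    have ineq: "i \<noteq> j" using ij by auto
    have cfn: "cf I q k i j < 0" using Pb[OF ij(1,2)] ij(3) by simp
    define e where "e = min (q i) (1 - q j)"
    have e0: "0 < e" "e \<le> q i" "e \<le> 1 - q j" using qi0 qj1 by (auto simp: e_def)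
    define q' where "q' = q(i := q i - e, j := q j + e)"
    have sq': "(\<Sum>l\<in>I. q' l) = \<mu>"
      unfolding q'_def using sum_pair_update[OF fin ij(1,2) ineq, of q "q i - e" "q j + e"] qs by simp
    have q'D: "q' \<in> D" unfolding inD
      using qb qo e0 sq' ij by (auto simp: q'_def)
    have ch: "g q' - g q = ((q i - e) * (q j + e) - q i * q j) * cf I q k i j"
      unfolding g_def q'_def by (rule g_change[OF fin ij(1,2) ineq]) simp
    have "(q i - e) * (q j + e) - q i * q j = e * (q i - q j) - e * e"
      by (simp add: algebra_simps)
    moreover have "e * (q i - q j) < 0" using e0 ij(3) by (simp add: mult_pos_neg)
    moreover have "0 < e * e" using e0 by simp
    ultimately have "(q i - e) * (q j + e) - q i * q j < 0" by simp
    then have "0 < g q' - g q" unfolding ch using cfn by (simp add: mult_neg_neg)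
    then show False using qmax q'D by fastforce
  qed
  define Zs where "Zs = {i\<in>I. q i = 0}"
  define Os where "Os = {i\<in>I. q i = 1}"
  define Mi where "Mi = {i\<in>I. 0 < q i \<and> q i < 1}"
  have part: "I = Zs \<union> Os \<union> Mi"
  proof (rule set_eqI)
    fix x show "x \<in> I \<longleftrightarrow> x \<in> Zs \<union> Os \<union> Mi"
      using qb[of x] by (cases "x \<in> I") (auto simp: Zs_def Os_def Mi_def less_le)
  qed
  have dj: "Zs \<inter> Os = {}" "Zs \<inter> Mi = {}" "Os \<inter> Mi = {}" by (auto simp: Zs_def Os_def Mi_def)
  have fins: "finite Zs" "finite Os" "finite Mi" using fin by (auto simp: Zs_def Os_def Mi_def)
  have midc: "q i = q j" if "i \<in> Mi" "j \<in> Mi" for i j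
  proof (rule ccontr)
    assume ne: "q i \<noteq> q j"
    have ij: "i \<in> I" "j \<in> I" using that by (auto simp: Mi_def)
    have b: "0 < q i" "q i < 1" "0 < q j" "q j < 1" using that by (auto simp: Mi_def)
    have "q i < q j \<or> q j < q i" using ne by linarith
    then show False
    proof
      assume "q i < q j" then have "q i = 0 \<or> q j = 1" using Pa[OF ij] by blast
      then show False using b by auto
    next
      assume "q j < q i" then have "q j = 0 \<or> q i = 1" using Pa[OF ij(2,1)] by blast
      then show False using b by auto
    qed
  qed
  obtain a where a: "0 < a" "a < 1" and aM: "\<And>i. i \<in> Mi \<Longrightarrow> q i = a"
  proof (cases "Mi = {}")
    case True then show ?thesis using that[of "1/2"] by simp
  next
    case False
    then obtain i0 where i0: "i0 \<in> Mi" by blast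
    have b: "0 < q i0" "q i0 < 1" using i0 by (auto simp: Mi_def)
    have "q i = q i0" if "i \<in> Mi" for i using midc[OF that i0] .
    then show ?thesis using that[of "q i0"] b by blast
  qed
  have qZ: "\<And>i. i \<in> Zs \<Longrightarrow> q i = 0" and qO: "\<And>i. i \<in> Os \<Longrightarrow> q i = 1"
    by (auto simp: Zs_def Os_def)
  have mu: "\<mu> = real (card Os) + real (card Mi) * a"
  proof -
    have "\<mu> = (\<Sum>i\<in>Zs \<union> Os \<union> Mi. q i)" using qs part by simp
    also have "\<dots> = (\<Sum>i\<in>Zs. q i) + (\<Sum>i\<in>Os. q i) + (\<Sum>i\<in>Mi. q i)"
      using fins dj by (simp add: sum.union_disjoint Int_Un_distrib2)
    also have "\<dots> = real (card Os) + real (card Mi) * a"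
      using qZ qO aM by simp
    finally show ?thesis .
  qed
  have contra: "real k - 1 - real (card (Os - {i, j})) < real (card (Mi - {i, j}) + 1) * a"
    if ij: "i \<in> I" "j \<in> I" "q i \<noteq> q j" for i j
  proof -
    let ?r = "card (Os - {i, j})" and ?m = "card (Mi - {i, j})"
    have e: "cf I q k i j = (if ?r + 2 \<le> k then bb ?m a (k - 2 - ?r) else 0) - (if ?r + 1 \<le> k then bb ?m a (k - 1 - ?r) else 0)"
      by (rule cf_config[OF fin part dj qZ qO aM])
    have "cf I q k i j < 0" by (rule Pb[OF ij])
    then have "(if ?r + 2 \<le> k then bb ?m a (k - 2 - ?r) else 0) < (if ?r + 1 \<le> k then bb ?m a (k - 1 - ?r) else 0)"
      using e by linarith
    then show ?thesis by (rule ratio_contra[OF a])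
  qed
  have kmu: "\<mu> + 1 \<le> real k" using kb by (simp add: \<mu>_def)
  have c1: "Zs = {} \<or> Mi = {}"
  proof (rule ccontr)
    assume "\<not> (Zs = {} \<or> Mi = {})"
    then obtain i j where i: "i \<in> Zs" and j: "j \<in> Mi" by blast
    have ij: "i \<in> I" "j \<in> I" "q i \<noteq> q j" using i j by (auto simp: Zs_def Mi_def)
    have e1: "Os - {i, j} = Os" using i j dj by auto
    have e2: "Mi - {i, j} = Mi - {j}" using i j dj by auto
    have "0 < card Mi" using j fins(3) card_gt_0_iff by blast
    then have "card (Mi - {j}) + 1 = card Mi" using j by (simp add: card_Diff_singleton)
    then show False using contra[OF ij] kmu mu unfolding e1 e2 by (simp add: algebra_simps)
  qed
  have c2: "Mi = {} \<or> Os = {}"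
  proof (rule ccontr)
    assume "\<not> (Mi = {} \<or> Os = {})"
    then obtain i j where i: "i \<in> Mi" and j: "j \<in> Os" by blast
    have ij: "i \<in> I" "j \<in> I" "q i \<noteq> q j" using i j by (auto simp: Os_def Mi_def)
    have e1: "Os - {i, j} = Os - {j}" using i j dj by auto
    have e2: "Mi - {i, j} = Mi - {i}" using i j dj by auto
    have "0 < card Mi" using i fins(3) card_gt_0_iff by blast
    then have "card (Mi - {i}) + 1 = card Mi" using i by (simp add: card_Diff_singleton)
    moreover have "0 < card Os" using j fins(2) card_gt_0_iff by blast
    then have "real (card (Os - {j})) = real (card Os) - 1" using j
      by (simp add: card_Diff_singleton of_nat_diff)
    ultimately show False using contra[OF ij] kmu mu a unfolding e1 e2 by (simp add: algebra_simps)
  qed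
  have c3: "Zs = {} \<or> Os = {}"
  proof (rule ccontr)
    assume "\<not> (Zs = {} \<or> Os = {})"
    then obtain i j where i: "i \<in> Zs" and j: "j \<in> Os" by blast
    have ij: "i \<in> I" "j \<in> I" "q i \<noteq> q j" using i j by (auto simp: Os_def Zs_def)
    have e1: "Os - {i, j} = Os - {j}" using i j dj by auto
    have e2: "Mi - {i, j} = Mi" using i j dj by auto
    have "0 < card Os" using j fins(2) card_gt_0_iff by blast
    then have "real (card (Os - {j})) = real (card Os) - 1" using j
      by (simp add: card_Diff_singleton of_nat_diff)
    then have "real k < real (card Os) + real (card Mi + 1) * a"
      using contra[OF ij] unfolding e1 e2 by simp
    then show False using kmu mu a by (simp add: algebra_simps)
  qed
  have gq: "g q = psum Mi (\<lambda>_. a) (\<lambda>c. k \<le> c + card Os)"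
    unfolding g_def by (subst part, rule config_psum) (use fins dj qZ qO aM in auto)
  have target_nonneg: "0 \<le> psum I (\<lambda>_. \<mu> / real n) (\<lambda>c. k \<le> c)"
  proof (rule psum_nonneg)
    have "0 \<le> \<mu>" unfolding \<mu>_def using q0 by (intro sum_nonneg) auto
    moreover have "\<mu> \<le> real n" unfolding \<mu>_def n_def
      using sum_mono[of I q0 "\<lambda>_. 1"] q0 by simp
    ultimately show "0 \<le> \<mu> / real n \<and> \<mu> / real n \<le> 1" for i using n0 by simp
  qed
  have gle: "g q \<le> psum I (\<lambda>_. \<mu> / real n) (\<lambda>c. k \<le> c)"
  proof (cases "Mi = {}")
    case True
    have "\<mu> = real (card Os)" using mu True by simp
    then have "\<not> k \<le> card Os" using kmu by simp
    then have "g q = 0" unfolding gq True psum_empty by simp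
    then show ?thesis using target_nonneg by simp
  next
    case False
    then have Z0: "Zs = {}" and O0: "Os = {}" using c1 c2 by auto
    have IM: "I = Mi" using part Z0 O0 by simp
    have "\<mu> = real n * a" using mu O0 IM by (simp add: n_def)
    then have an: "a = \<mu> / real n" using n0 by simp
    have "g q = psum I (\<lambda>_. a) (\<lambda>c. k \<le> c)" unfolding gq O0 IM by simp
    then show ?thesis unfolding an by simp
  qed
  have "g q1 \<le> g q" using qmax q1D by blast
  moreover have "g q1 = psum I q0 (\<lambda>c. k \<le> c)" unfolding g_def
    by (rule psum_cong) (simp add: q1_def)
  ultimately show ?thesis using gle by (simp add: \<mu>_def n_def)
qed



lemma prob_event:
  fixes M :: "'a measure" and T :: "nat \<Rightarrow> 'a \<Rightarrow> bool" and q :: "nat \<Rightarrow> real"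
  assumes ps: "prob_space M" and ind: "prob_space.indep_vars M (\<lambda>_. count_space UNIV) T I"
    and fin: "finite I" and ne: "I \<noteq> {}"
    and qm: "\<And>i. i \<in> I \<Longrightarrow> measure M {\<omega> \<in> space M. T i \<omega>} = q i"
  shows "{\<omega> \<in> space M. P (card {i \<in> I. T i \<omega>})} \<in> sets M \<and>
         measure M {\<omega> \<in> space M. P (card {i \<in> I. T i \<omega>})} = psum I q P"
proof -
  interpret prob_space M by (rule ps)
  have rv: "\<And>i. i \<in> I \<Longrightarrow> T i \<in> measurable M (count_space UNIV)"
    and isets: "indep_sets (\<lambda>i. sigma_sets (space M) {T i -` A \<inter> space M | A. A \<in> sets (count_space UNIV)}) I"
    using ind unfolding indep_vars_def by auto
  define X where "X A i = T i -` {i \<in> A} \<inter> space M" for A i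
  have Xs: "X A i \<in> sigma_sets (space M) {T i -` B \<inter> space M | B. B \<in> sets (count_space UNIV)}" for A i
    unfolding X_def by (rule sigma_sets.Basic) auto
  have Tev: "{\<omega> \<in> space M. T i \<omega>} \<in> events" if "i \<in> I" for i
  proof -
    have "T i -` {True} \<inter> space M \<in> events" using rv[OF that] by (rule measurable_sets) simp
    moreover have "T i -` {True} \<inter> space M = {\<omega> \<in> space M. T i \<omega>}" by auto
    ultimately show ?thesis by simp
  qed
  have Xev: "X A i \<in> events" if "i \<in> I" for A i
  proof -
    have "T i -` {i \<in> A} \<inter> space M \<in> events" using rv[OF that] by (rule measurable_sets) simp
    then show ?thesis by (simp add: X_def)
  qed
  have Xp: "prob (X A i) = (if i \<in> A then q i else 1 - q i)" if "i \<in> I" for A i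
  proof (cases "i \<in> A")
    case True
    have "X A i = {\<omega> \<in> space M. T i \<omega>}" using True by (auto simp: X_def)
    then show ?thesis using True qm[OF that] by simp
  next
    case False
    have "X A i = space M - {\<omega> \<in> space M. T i \<omega>}" using False by (auto simp: X_def)
    then show ?thesis using False qm[OF that] prob_compl[OF Tev[OF that]] by simp
  qed
  define E where "E A = (\<Inter>i\<in>I. X A i)" for A
  have Eeq: "E A = {\<omega> \<in> space M. {i \<in> I. T i \<omega>} = A}" if "A \<subseteq> I" for A
    using that ne by (auto simp: E_def X_def)
  have Eev: "E A \<in> events" for A
    unfolding E_def using fin ne Xev by (intro sets.finite_INT) auto
  have Ep: "prob (E A) = pw I q A" if A: "A \<subseteq> I" for A
  proof -
    have "prob (E A) = (\<Prod>i\<in>I. prob (X A i))"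
      unfolding E_def by (rule indep_setsD[OF isets subset_refl ne fin]) (use Xs in auto)
    also have "\<dots> = (\<Prod>i\<in>I. if i \<in> A then q i else 1 - q i)"
      by (rule prod.cong) (auto simp: Xp)
    also have "\<dots> = (\<Prod>i\<in>I \<inter> {x. x \<in> A}. q i) * (\<Prod>i\<in>I \<inter> - {x. x \<in> A}. 1 - q i)"
      by (rule prod.If_cases[OF fin])
    also have "I \<inter> {x. x \<in> A} = A" using A by auto
    also have "I \<inter> - {x. x \<in> A} = I - A" by auto
    finally show ?thesis unfolding pw_def .
  qed
  let ?S = "{A. A \<subseteq> I \<and> P (card A)}"
  have Sf: "finite ?S" by (rule psum_fin[OF fin])
  have ev: "{\<omega> \<in> space M. P (card {i \<in> I. T i \<omega>})} = (\<Union>A\<in>?S. E A)"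
  proof -
    have "(\<Union>A\<in>?S. E A) = (\<Union>A\<in>?S. {\<omega> \<in> space M. {i \<in> I. T i \<omega>} = A})"
      by (rule SUP_cong) (auto simp: Eeq)
    also have "\<dots> = {\<omega> \<in> space M. P (card {i \<in> I. T i \<omega>})}" by auto
    finally show ?thesis by simp
  qed
  have dj: "disjoint_family_on E ?S"
    unfolding disjoint_family_on_def using Eeq by auto
  have "measure M (\<Union>A\<in>?S. E A) = (\<Sum>A\<in>?S. measure M (E A))"
    by (rule measure_finite_Union[OF Sf _ dj]) (use Eev in auto)
  also have "\<dots> = psum I q P" unfolding psum_def by (rule sum.cong) (auto simp: Ep)
  finally show ?thesis using ev Sf Eev by auto
qed



lemma psum_mono_P:
  assumes fin: "finite I" and q: "\<And>i. i \<in> I \<Longrightarrow> 0 \<le> q i \<and> q i \<le> 1"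
    and PQ: "\<And>c. c \<le> card I \<Longrightarrow> P c \<Longrightarrow> Q c"
  shows "psum I q P \<le> psum I q Q"
proof -
  have "psum I q Q = psum I q (\<lambda>c. Q c \<and> P c) + psum I q (\<lambda>c. Q c \<and> \<not> P c)"
    by (rule psum_split[OF fin])
  also have "psum I q (\<lambda>c. Q c \<and> P c) = psum I q P"
    by (rule psum_cong_P[OF _ fin]) (use PQ in auto)
  finally show ?thesis using psum_nonneg[OF q, where P="\<lambda>c. Q c \<and> \<not> P c"] by simp
qed

lemma bt_antimono_a:
  assumes "a < n" "0 \<le> x" "x \<le> 1"
  shows "bt n (Suc a) x \<le> bt n a x"
  using bt_rec[OF assms(1), of x] assms by simp

theorem theorem2:
  fixes M :: "'a measure" and T :: "nat \<Rightarrow> 'a \<Rightarrow> bool"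
    and q :: "nat \<Rightarrow> real" and n :: nat and \<alpha> :: real
  assumes "prob_space M"
    and "n \<ge> 1"
    and "prob_space.indep_vars M (\<lambda>_. count_space UNIV) T {1..n}"
    and "\<And>i. i \<in> {1..n} \<Longrightarrow> q i \<in> {0..1}"
    and "\<And>i. i \<in> {1..n} \<Longrightarrow> measure M {\<omega> \<in> space M. T i \<omega>} = q i"
    and "0 \<le> \<alpha>" and "\<alpha> \<le> 1/2"
  shows "measure M {\<omega> \<in> space M.
            q_hat n \<alpha> (card {i \<in> {1..n}. T i \<omega>}) \<le> (\<Sum>i=1..n. q i) / real n}
         \<ge> 1 - \<alpha>"
proof -
  note ps = assms(1) and n1 = assms(2) and ind = assms(3) and qb = assms(4) and qm = assms(5)
    and al0 = assms(6) and al1 = assms(7)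
  define I where "I = {1..n}"
  have fin: "finite I" and ne: "I \<noteq> {}" and cI: "card I = n" using n1 by (auto simp: I_def)
  define \<mu> where "\<mu> = (\<Sum>i=1..n. q i)"
  define p where "p = \<mu> / real n"
  have q01: "\<And>i. i \<in> I \<Longrightarrow> 0 \<le> q i \<and> q i \<le> 1" using qb by (auto simp: I_def)
  have mu0: "0 \<le> \<mu>" unfolding \<mu>_def using q01 by (intro sum_nonneg) (auto simp: I_def)
  have mun: "\<mu> \<le> real n" unfolding \<mu>_def using sum_mono[of "{1..n}" q "\<lambda>_. 1"] q01 by (simp add: I_def)
  have n0: "0 < real n" using n1 by simp
  have p01: "0 \<le> p" "p \<le> 1" using mu0 mun n0 by (auto simp: p_def)
  have meas: "measure M {\<omega> \<in> space M. q_hat n \<alpha> (card {i \<in> I. T i \<omega>}) \<le> p}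
      = psum I q (\<lambda>c. q_hat n \<alpha> c \<le> p)"
  proof -
    have indI: "prob_space.indep_vars M (\<lambda>_. count_space UNIV) T I" using ind by (simp add: I_def)
    have qmI: "\<And>i. i \<in> I \<Longrightarrow> measure M {\<omega> \<in> space M. T i \<omega>} = q i" using qm by (simp add: I_def)
    have "{\<omega> \<in> space M. q_hat n \<alpha> (card {i \<in> I. T i \<omega>}) \<le> p} \<in> sets M \<and>
        measure M {\<omega> \<in> space M. q_hat n \<alpha> (card {i \<in> I. T i \<omega>}) \<le> p} = psum I q (\<lambda>c. q_hat n \<alpha> c \<le> p)"
      by (rule prob_event[OF ps indI fin ne]) (rule qmI)
    then show ?thesis by blast
  qed
  define KK where "KK = {c. 2 \<le> c \<and> c \<le> n \<and> bt n (c - 1) p < \<alpha>}"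
  have bad: "c \<in> KK" if c: "c \<le> n" "\<not> q_hat n \<alpha> c \<le> p" for c
  proof -
    have c2: "2 \<le> c"
    proof (rule ccontr)
      assume "\<not> 2 \<le> c"
      then have "q_hat n \<alpha> c = 0" by (cases c) (auto simp: q_hat_def reg_inc_beta_inv_def)
      then show False using c p01 by simp
    qed
    have "bt n (c - 1) p < \<alpha>"
      by (rule qhat_gt[OF c2 c(1) al0]) (use al1 p01 c in auto)
    then show ?thesis using c2 c by (simp add: KK_def)
  qed
  have main: "1 - \<alpha> \<le> psum I q (\<lambda>c. q_hat n \<alpha> c \<le> p)"
  proof (cases "KK = {}")
    case True
    have "psum I q (\<lambda>c. q_hat n \<alpha> c \<le> p) = psum I q (\<lambda>_. True)"
      by (rule psum_cong_P[OF _ fin]) (use bad True cI in auto)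
    then show ?thesis using psum_total[OF fin] al0 by simp
  next
    case False
    define k0 where "k0 = Min KK"
    have KKf: "finite KK" by (rule finite_subset[of _ "{..n}"]) (auto simp: KK_def)
    have k0K: "k0 \<in> KK" using Min_in[OF KKf False] by (simp add: k0_def)
    have k0min: "k0 \<le> c" if "c \<in> KK" for c using Min_le[OF KKf that] by (simp add: k0_def)
    have k02: "2 \<le> k0" "k0 \<le> n" and btk: "bt n (k0 - 1) p < \<alpha>" using k0K by (auto simp: KK_def)
    have kmu: "\<mu> + 1 \<le> real k0"
    proof (rule ccontr)
      assume "\<not> \<mu> + 1 \<le> real k0"
      then have "real (k0 - 1) \<le> real n * p" using k02 n0 by (simp add: p_def of_nat_diff)
      then have "1/2 \<le> bt n (k0 - 1) p"
        by (intro median_below) (use k02 p01 in auto)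
      then show False using btk al1 by simp
    qed
    have sumI: "(\<Sum>i\<in>I. q i) = \<mu>" by (simp add: I_def \<mu>_def)
    have "psum I q (\<lambda>c. k0 \<le> c) \<le> psum I (\<lambda>_. (\<Sum>i\<in>I. q i) / real (card I)) (\<lambda>c. k0 \<le> c)"
    proof (rule hoeffding[OF fin ne q01])
      have "sum q I = \<mu>" by (simp add: I_def \<mu>_def)
      then show "(\<Sum>i\<in>I. q i) + 1 \<le> real k0" using kmu by simp
    qed
    also have "\<dots> = bt n k0 p" unfolding sumI cI psum_bt[OF fin] by (simp add: cI p_def)
    also have "\<dots> \<le> bt n (k0 - 1) p"
      using bt_antimono_a[of "k0 - 1" n p] k02 p01 by simp
    finally have tail: "psum I q (\<lambda>c. k0 \<le> c) < \<alpha>" using btk by simp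
    have "psum I q (\<lambda>c. c < k0) \<le> psum I q (\<lambda>c. q_hat n \<alpha> c \<le> p)"
    proof (rule psum_mono_P[OF fin q01])
      fix c assume "c \<le> card I" "c < k0"
      then show "q_hat n \<alpha> c \<le> p" using bad[of c] k0min[of c] cI by force
    qed
    moreover have "psum I q (\<lambda>c. c < k0) = 1 - psum I q (\<lambda>c. k0 \<le> c)"
    proof -
      have "psum I q (\<lambda>_. True) = psum I q (\<lambda>c. True \<and> k0 \<le> c) + psum I q (\<lambda>c. True \<and> \<not> k0 \<le> c)"
        by (rule psum_split[OF fin])
      moreover have "psum I q (\<lambda>c. True \<and> \<not> k0 \<le> c) = psum I q (\<lambda>c. c < k0)"
        by (rule psum_cong_P[OF _ fin]) auto
      ultimately show ?thesis using psum_total[OF fin] by simp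
    qed
    ultimately show ?thesis using tail by simp
  qed
  show ?thesis using meas main by (simp add: I_def p_def \<mu>_def)
qed



end
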